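(* Under the setting in the context, for all $\varepsilon>0$, $t>0$ and $x\in\mathbb{R}$, \[ \frac{\Phi(t/\varepsilon)}{\Phi(0)}\exp\!\left(\frac1\varepsilon[\psi_\varepsilon(t,x)-\psi_\varepsilon(0,x)]\right)\le\mathfrak{B}_\varepsilon(\psi_\varepsilon)(t,x)\le\frac{\Phi(1+t/\varepsilon)}{\Phi(1)}\exp\!\left(\frac1\varepsilon[\psi_\varepsilon(t,x)-\psi_\varepsilon(0,x)]\right). \]
   Context: Fix $\mu\in(0,1)$, $\sigma>0$. Let $\beta(a)=\mu/(1+a)$, $\Phi(a)=\beta(a)\exp(-\int_0^a\beta)=\mu(1+a)^{-1-\mu}$, $\omega(z)=\frac{1}{\sigma\sqrt{2\pi}}e^{-z^2/(2\sigma^2)}$. For each $\varepsilon>0$ let $\phi^0_\varepsilon(x,a)$, $x\in\mathbb{R}$, $a\in[0,1)$, be an initial datum $\phi^0_\varepsilon=v+\varepsilon\eta$ with $v$ bounded, $\exp(-\inf_x\eta(x,\cdot))\in L^1$, $\phi^0_\varepsilon$ Lipschitz in $x$ uniformly in $\varepsilon\in(0,1)$, there is $C>0$ with $\int_0^1\int\Phi(a)\omega(z)e^{\int_0^a\beta}e^{-\eta(x-\varepsilon z,a)}\,\mathrm{d}z\,\mathrm{d}a>e^{-C/\varepsilon}$ for all $\varepsilon,x$, and $\partial_x^2\phi^0_\varepsilon\le\mathfrak{C}_{xx}$ distributionally. Let $n_\varepsilon\ge0$ solve $\partial_tn_\varepsilon+\frac1\varepsilon\partial_an_\varepsilon+\frac1\varepsilon\beta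 n_\varepsilon=0$, $n_\varepsilon(t,x,0)=\int_0^\infty\int\beta(a)\omega(z)n_\varepsilon(t,x-\varepsilon z,a)\,\mathrm{d}z\,\mathrm{d}a$, $n_\varepsilon(0,x,a)=e^{-\phi^0_\varepsilon(x,a)/\varepsilon}\mathbf{1}_{a<1}$; set $\psi_\varepsilon(t,x)=-\varepsilon\ln n_\varepsilon(t,x,0)$. In particular $e^{-\psi_\varepsilon(0,x)/\varepsilon}=\int_0^1\int_{\mathbb{R}}\Phi(a)\omega(z)e^{-\phi^0_\varepsilon(x-\varepsilon z,a)/\varepsilon}e^{\int_0^a\beta}\,\mathrm{d}z\,\mathrm{d}a$. Define $\mathfrak{B}_\varepsilon(\psi_\varepsilon)(t,x)=\int_0^1\int_{\mathbb{R}}\omega(z)\Phi(a+t/\varepsilon)\exp\left(\frac1\varepsilon[\psi_\varepsilon(t,x)-\phi^0_\varepsilon(x-\varepsilon z,a)]\right)\exp\left(\int_0^a\beta\right)\mathrm{d}z\,\mathrm{d}a$. *)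

theory Defs
  imports "HOL-Analysis.Analysis"
begin

definition beta :: "real \<Rightarrow> real \<Rightarrow> real" where
  "beta mu a = mu / (1 + a)"

definition expintbeta :: "real \<Rightarrow> real \<Rightarrow> real" where
  "expintbeta mu a = exp (integral {0..a} (beta mu))"

text \<open>Phi(a) = beta(a) exp(- int_0^a beta)  ( = mu (1+a)^(-1-mu) )\<close>
definition Phi :: "real \<Rightarrow> real \<Rightarrow> real" where
  "Phi mu a = beta mu a * exp (- integral {0..a} (beta mu))"

definition omega :: "real \<Rightarrow> real \<Rightarrow> real" where
  "omega sig z = exp (- z\<^sup>2 / (2 * sig\<^sup>2)) / (sig * sqrt (2 * pi))"

definition smooth_fun :: "(real \<Rightarrow> real) \<Rightarrow> bool" where
  "smooth_fun g \<longleftrightarrow> (\<forall>k x. ((deriv ^^ k) g) differentiable (at x))"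

definition test_fun :: "(real \<Rightarrow> real) \<Rightarrow> bool" where
  "test_fun g \<longleftrightarrow> smooth_fun g \<and> compact (closure {x. g x \<noteq> 0})"

text \<open>Distributional inequality  d^2/dx^2 f <= c  on the real line:
  for every nonnegative test function g,  int f g'' <= c int g.\<close>
definition dist_second_deriv_le :: "(real \<Rightarrow> real) \<Rightarrow> real \<Rightarrow> bool" where
  "dist_second_deriv_le f c \<longleftrightarrow>
     (\<forall>g. test_fun g \<and> (\<forall>x. g x \<ge> 0) \<longrightarrow>
        (LINT x|lborel. f x * deriv (deriv g) x) \<le> c * (LINT x|lborel. g x))"

text \<open>The operator B_eps(psi)(t,x); phi0 is the initial datum phi^0_eps (for this eps),
  psi the function psi_eps.\<close>
definition Bop :: "real \<Rightarrow> real \<Rightarrow> (real \<Rightarrow> real \<Rightarrow> real) \<Rightarrow> (real \<Rightarrow> real \<Rightarrow> real)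
                   \<Rightarrow> real \<Rightarrow> real \<Rightarrow> real \<Rightarrow> real" where
  "Bop mu sig phi0 psi eps t x =
     (LINT a:{0..<1}|lborel. LINT z|lborel.
        omega sig z * Phi mu (a + t / eps)
        * exp ((psi t x - phi0 (x - eps * z) a) / eps) * expintbeta mu a)"

end

theory Submission
  imports Defs
begin
lemma intb: assumes "a \<ge> 0" shows "integral {0..a} (beta mu) = mu * ln (1 + a)"
proof -
  have "((beta mu) has_integral (mu * ln (1 + a) - mu * ln (1 + 0))) {0..a}"
  proof (rule fundamental_theorem_of_calculus)
    show "0 \<le> a" by fact
    fix y assume y: "y \<in> {0..a}"
    have "((\<lambda>y. mu * ln (1 + y)) has_real_derivative mu * (1 / (1 + y))) (at y within {0..a})"
      using y by (auto intro!: derivative_eq_intros)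
    then show "((\<lambda>y. mu * ln (1 + y)) has_vector_derivative beta mu y) (at y within {0..a})"
      by (simp add: has_real_derivative_iff_has_vector_derivative beta_def)
  qed
  then show ?thesis by (simp add: integral_unique)
qed

lemma intb_all: "integral {0..y} (beta mu) = (if y < 0 then 0 else mu * ln (1 + y))"
  by (simp add: intb)

lemma Phi_meas[measurable]: "(\<lambda>a. Phi mu (a + s)) \<in> borel_measurable borel"
  unfolding Phi_def intb_all beta_def by measurable

lemma E_meas[measurable]: "(\<lambda>a. expintbeta mu a) \<in> borel_measurable borel"
  unfolding expintbeta_def intb_all by measurable

lemma powr1p: assumes "(y::real) > 0" shows "y powr (1 + m) = y * y powr m"
  using assms by (simp add: powr_add)

lemma Phi_cf: assumes "a \<ge> 0" shows "Phi mu a = mu / ((1 + a) * (1 + a) powr mu)"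
proof -
  have "Phi mu a = mu / (1 + a) * (1 + a) powr (- mu)"
    using assms by (simp add: Phi_def intb beta_def powr_def)
  then show ?thesis using assms by (simp add: powr_minus_divide)
qed

lemma E_cf: assumes "a \<ge> 0" shows "expintbeta mu a = (1 + a) powr mu"
  using assms by (simp add: expintbeta_def intb powr_def)

lemma PhiE: assumes "a \<ge> 0" shows "Phi mu a * expintbeta mu a = beta mu a"
  using assms by (simp add: Phi_cf E_cf beta_def)

lemma PhiE_shift: assumes "a \<ge> 0" "s \<ge> 0"
  shows "Phi mu (a + s) * expintbeta mu a = beta mu a * ((1 + a) / (1 + a + s)) powr (1 + mu)"
proof -
  define P where "P = (1 + a + s) powr mu"
  define Q where "Q = (1 + a) powr mu"
  have p1: "P > 0" "Q > 0" "1 + a + s > 0" "1 + a > 0" using assms by (auto simp: P_def Q_def)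
  have "Phi mu (a + s) * expintbeta mu a = mu / ((1 + a + s) * P) * Q"
    using assms by (simp add: Phi_cf E_cf P_def Q_def add.assoc)
  moreover have "((1 + a) / (1 + a + s)) powr (1 + mu) = ((1 + a) * Q) / ((1 + a + s) * P)"
    using p1 by (simp add: powr_divide powr1p P_def Q_def)
  moreover have "mu / (1 + a) * (((1 + a) * Q) / ((1 + a + s) * P)) = mu * (Q / ((1 + a + s) * P))"
    using p1 by simp
  ultimately show ?thesis using p1 by (simp add: beta_def)
qed

lemma ratio_bounds: assumes a: "0 \<le> a" "a \<le> 1" and s: "s > 0" and mu: "mu > 0"
  shows "Phi mu s / Phi mu 0 * beta mu a \<le> Phi mu (a + s) * expintbeta mu a"
    and "Phi mu (a + s) * expintbeta mu a \<le> Phi mu (1 + s) / Phi mu 1 * beta mu a"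
proof -
  have r0: "Phi mu s / Phi mu 0 = (1 / (1 + s)) powr (1 + mu)"
  proof -
    have X: "(1 + s) powr mu > 0" using s by auto
    have "(1 / (1 + s)) powr (1 + mu) = 1 / ((1 + s) * (1 + s) powr mu)"
      using s by (simp add: powr_divide powr1p)
    moreover have "Phi mu s / Phi mu 0 = mu / ((1 + s) * (1 + s) powr mu) / mu"
      using s by (simp add: Phi_cf)
    ultimately show ?thesis using mu by simp
  qed
  have r1: "Phi mu (1 + s) / Phi mu 1 = (2 / (2 + s)) powr (1 + mu)"
  proof -
    have "(2 / (2 + s)) powr (1 + mu) = (2 * 2 powr mu) / ((2 + s) * (2 + s) powr mu)"
      using s by (simp add: powr_divide powr1p)
    moreover have "Phi mu (1 + s) / Phi mu 1 = mu / ((2 + s) * (2 + s) powr mu) / (mu / (2 * 2 powr mu))"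
      using s by (simp add: Phi_cf add.assoc[symmetric])
    ultimately show ?thesis using mu by simp
  qed
  have b: "beta mu a \<ge> 0" using a mu by (simp add: beta_def)
  have "1 / (1 + s) \<le> (1 + a) / (1 + a + s)" using a s by (simp add: field_simps)
  then have "(1 / (1 + s)) powr (1 + mu) \<le> ((1 + a) / (1 + a + s)) powr (1 + mu)"
    using s mu by (intro powr_mono2) auto
  then show "Phi mu s / Phi mu 0 * beta mu a \<le> Phi mu (a + s) * expintbeta mu a"
    unfolding r0 PhiE_shift[OF a(1) less_imp_le[OF s]] using b by (simp add: mult.commute mult_left_mono)
  have "(1 + a) / (1 + a + s) \<le> 2 / (2 + s)" using a s by (simp add: field_simps)
  then have "((1 + a) / (1 + a + s)) powr (1 + mu) \<le> (2 / (2 + s)) powr (1 + mu)"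
    using a s mu by (intro powr_mono2) auto
  then show "Phi mu (a + s) * expintbeta mu a \<le> Phi mu (1 + s) / Phi mu 1 * beta mu a"
    unfolding r1 PhiE_shift[OF a(1) less_imp_le[OF s]] using b by (simp add: mult.commute mult_left_mono)
qed
lemma joint_meas:
  fixes v :: "real \<Rightarrow> real \<Rightarrow> real"
  assumes mv: "(\<lambda>(y, a). v y a) \<in> borel_measurable borel"
  shows "(\<lambda>p. v (x - e * snd p) (fst p)) \<in> borel_measurable (lborel \<Otimes>\<^sub>M lborel)"
proof -
  have c: "continuous_on UNIV (\<lambda>(a::real, z::real). (x - e * z, a))"
    by (auto intro!: continuous_intros simp: split_beta')
  have p: "(\<lambda>(a::real, z::real). (x - e * z, a)) \<in> measurable borel borel"
    using c by (intro borel_measurable_continuous_onI) (auto)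
  have "(\<lambda>(y, a). v y a) \<circ> (\<lambda>(a::real, z::real). (x - e * z, a)) \<in> borel_measurable borel"
    by (rule measurable_comp[OF p mv])
  then have "(\<lambda>p. v (x - e * snd p) (fst p)) \<in> borel_measurable borel"
    by (simp add: o_def split_beta')
  then show ?thesis unfolding lborel_prod by (simp add: measurable_lborel1)
qed

lemma omega_nonneg: "sig > 0 \<Longrightarrow> omega sig z \<ge> 0"
  by (simp add: omega_def)

lemma omega_meas[measurable]: "omega sig \<in> borel_measurable borel"
  unfolding omega_def by measurable

theorem lemma6:
  fixes mu sig :: real
    and v eta :: "real \<Rightarrow> real \<Rightarrow> real"
    and phi0 :: "real \<Rightarrow> real \<Rightarrow> real \<Rightarrow> real"
    and n :: "real \<Rightarrow> real \<Rightarrow> real \<Rightarrow> real \<Rightarrow> real"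
    and psi :: "real \<Rightarrow> real \<Rightarrow> real \<Rightarrow> real"
    and C Cxx eps t x :: real
  assumes mu: "0 < mu" "mu < 1"
    and sig: "0 < sig"
    and phi0_def: "\<And>e y a. phi0 e y a = v y a + e * eta y a"
    and meas_v: "(\<lambda>(y, a). v y a) \<in> borel_measurable borel"
    and meas_eta: "(\<lambda>(y, a). eta y a) \<in> borel_measurable borel"
    and v_bdd: "bounded ((\<lambda>(y, a). v y a) ` (UNIV \<times> {0..<1}))"
    and eta_L1_meas: "(\<lambda>a. (SUP y. ennreal (exp (- eta y a))) * indicator {0..<1} a)
                        \<in> borel_measurable lborel"
    and eta_L1: "(\<integral>\<^sup>+ a. (SUP y. ennreal (exp (- eta y a))) * indicator {0..<1} a \<partial>lborel) < \<infinity>"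
    and lipschitz: "\<exists>L. \<forall>e\<in>{0<..<1}. \<forall>a\<in>{0..<1}. \<forall>y1 y2.
                      \<bar>phi0 e y1 a - phi0 e y2 a\<bar> \<le> L * \<bar>y1 - y2\<bar>"
    and lower: "\<And>e y. e > 0 \<Longrightarrow>
        (LINT a:{0..<1}|lborel. LINT z|lborel.
           Phi mu a * omega sig z * expintbeta mu a * exp (- eta (y - e * z) a))
        > exp (- C / e)"
    and semiconcave: "\<And>e a. e > 0 \<Longrightarrow> a \<in> {0..<1} \<Longrightarrow>
        dist_second_deriv_le (\<lambda>y. phi0 e y a) Cxx"
    and n_nonneg: "\<And>e s y a. e > 0 \<Longrightarrow> s \<ge> 0 \<Longrightarrow> a \<ge> 0 \<Longrightarrow> n e s y a \<ge> 0"
    and n_pde: "\<And>e s y a. e > 0 \<Longrightarrow> s > 0 \<Longrightarrow> a > 0 \<Longrightarrow>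
        ((\<lambda>r. n e (s + r) y (a + r / e)) has_real_derivative
            (- (1 / e) * beta mu a * n e s y a)) (at 0)"
    and n_bdry: "\<And>e s y. e > 0 \<Longrightarrow> s \<ge> 0 \<Longrightarrow>
        n e s y 0 = (LINT a:{0..}|lborel. LINT z|lborel.
                       beta mu a * omega sig z * n e s (y - e * z) a)"
    and n_init: "\<And>e y a. e > 0 \<Longrightarrow> a > 0 \<Longrightarrow>
        n e 0 y a = exp (- phi0 e y a / e) * indicator {..<1} a"
    and psi_def: "\<And>e s y. psi e s y = - e * ln (n e s y 0)"
    and eps: "eps > 0" and t: "t > 0"
  shows "Phi mu (t / eps) / Phi mu 0 * exp ((psi eps t x - psi eps 0 x) / eps)
           \<le> Bop mu sig (phi0 eps) (psi eps) eps t x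
         \<and> Bop mu sig (phi0 eps) (psi eps) eps t x
           \<le> Phi mu (1 + t / eps) / Phi mu 1 * exp ((psi eps t x - psi eps 0 x) / eps)"
proof -
  define s where "s = t / eps"
  have s_pos: "s > 0" using eps t by (simp add: s_def)
  obtain M where M: "\<And>y a. a \<in> {0..<1} \<Longrightarrow> \<bar>v y a\<bar> \<le> M"
    using v_bdd unfolding bounded_iff by fastforce
  define f where "f a z = omega sig z * exp (- phi0 eps (x - eps * z) a / eps)" for a z
  define h where "h a z = omega sig z * exp (- eta (x - eps * z) a)" for a z
  define g where "g a = (LINT z|lborel. f a z)" for a
  define k where "k a = (LINT z|lborel. h a z)" for a
  have Jv[measurable]: "(\<lambda>p. v (x - eps * snd p) (fst p)) \<in> borel_measurable (lborel \<Otimes>\<^sub>M lborel)"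
    by (rule joint_meas[OF meas_v])
  have Je[measurable]: "(\<lambda>p. eta (x - eps * snd p) (fst p)) \<in> borel_measurable (lborel \<Otimes>\<^sub>M lborel)"
    by (rule joint_meas[OF meas_eta])
  have Jf: "(\<lambda>p. f (fst p) (snd p)) \<in> borel_measurable (lborel \<Otimes>\<^sub>M lborel)"
    unfolding f_def phi0_def by measurable
  have Jh: "(\<lambda>p. h (fst p) (snd p)) \<in> borel_measurable (lborel \<Otimes>\<^sub>M lborel)"
    unfolding h_def by measurable
  have fm: "f a \<in> borel_measurable lborel" for a
    using measurable_Pair2[OF Jf, of a] by simp
  have hm: "h a \<in> borel_measurable lborel" for a
    using measurable_Pair2[OF Jh, of a] by simp
  have gm[measurable]: "g \<in> borel_measurable lborel"
    unfolding g_def using lborel.borel_measurable_lebesgue_integral[of f lborel] Jf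
    by (simp add: split_beta')
  have km[measurable]: "k \<in> borel_measurable lborel"
    unfolding k_def using lborel.borel_measurable_lebesgue_integral[of h lborel] Jh
    by (simp add: split_beta')
  have fnn: "f a z \<ge> 0" for a z using sig by (simp add: f_def omega_nonneg)
  have hnn: "h a z \<ge> 0" for a z using sig by (simp add: h_def omega_nonneg)
  have fh: "exp (- M / eps) * h a z \<le> f a z \<and> f a z \<le> exp (M / eps) * h a z"
    if a: "a \<in> {0..<1}" for a z
  proof -
    have eq: "f a z = exp (- v (x - eps * z) a / eps) * h a z"
      using eps by (simp add: f_def h_def phi0_def add_divide_distrib exp_add[symmetric] exp_diff field_simps)
    have Mb: "\<bar>v (x - eps * z) a\<bar> \<le> M" using M a by blast
    have "exp (- M / eps) \<le> exp (- v (x - eps * z) a / eps)"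
      using Mb eps by (auto simp: field_simps abs_le_iff)
    moreover have "exp (- v (x - eps * z) a / eps) \<le> exp (M / eps)"
      using Mb eps by (auto simp: field_simps abs_le_iff)
    ultimately show ?thesis unfolding eq using hnn[of a z] by (simp add: mult_right_mono)
  qed
  have gk: "exp (- M / eps) * k a \<le> g a \<and> g a \<le> exp (M / eps) * k a"
    if a: "a \<in> {0..<1}" for a
  proof (cases "integrable lborel (h a)")
    case True
    have fi: "integrable lborel (f a)"
    proof (rule Bochner_Integration.integrable_bound[where f="\<lambda>z. exp (M / eps) * h a z"])
      show "integrable lborel (\<lambda>z. exp (M / eps) * h a z)" using True by simp
      show "f a \<in> borel_measurable lborel" by (rule fm)
      show "AE z in lborel. norm (f a z) \<le> norm (exp (M / eps) * h a z)"
        using fh[OF a] fnn hnn by (auto intro: AE_I2)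
    qed
    have "exp (- M / eps) * k a = (LINT z|lborel. exp (- M / eps) * h a z)" by (simp add: k_def)
    also have "\<dots> \<le> g a" unfolding g_def
      using fh[OF a] True fi by (intro integral_mono) auto
    finally have 1: "exp (- M / eps) * k a \<le> g a" .
    have "g a \<le> (LINT z|lborel. exp (M / eps) * h a z)" unfolding g_def
      using fh[OF a] True fi by (intro integral_mono) auto
    also have "\<dots> = exp (M / eps) * k a" by (simp add: k_def)
    finally show ?thesis using 1 by simp
  next
    case False
    have "\<not> integrable lborel (f a)"
    proof
      assume fi: "integrable lborel (f a)"
      have "integrable lborel (h a)"
      proof (rule Bochner_Integration.integrable_bound[where f="\<lambda>z. exp (M / eps) * f a z"])
        show "integrable lborel (\<lambda>z. exp (M / eps) * f a z)" using fi by simp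
        show "h a \<in> borel_measurable lborel" by (rule hm)
        have "h a z \<le> exp (M / eps) * f a z" for z
        proof -
          have "exp (- M / eps) * h a z \<le> f a z" using fh[OF a] by blast
          then have "exp (M / eps) * (exp (- M / eps) * h a z) \<le> exp (M / eps) * f a z"
            by simp
          then show ?thesis by (simp add: exp_minus[symmetric] mult.assoc[symmetric] exp_add[symmetric])
        qed
        then show "AE z in lborel. norm (h a z) \<le> norm (exp (M / eps) * f a z)"
          using fnn hnn by (auto intro: AE_I2)
      qed
      with False show False by simp
    qed
    then show ?thesis using False by (simp add: g_def k_def not_integrable_integral_eq)
  qed
  have gnn: "g a \<ge> 0" for a unfolding g_def using fnn by (simp add: integral_nonneg)
  have knn: "k a \<ge> 0" for a unfolding k_def using hnn by (simp add: integral_nonneg)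
  have betam[measurable]: "(\<lambda>a. beta mu a) \<in> borel_measurable lborel"
    unfolding beta_def by measurable
  have bnn: "a \<ge> 0 \<Longrightarrow> beta mu a \<ge> 0" for a using mu by (simp add: beta_def)
  define F where "F a = (LINT z|lborel. beta mu a * omega sig z * n eps 0 (x - eps * z) a)" for a
  have N0: "n eps 0 x 0 = (LINT a:{0..<1}|lborel. beta mu a * g a)"
  proof -
    have bd: "n eps 0 x 0 = (LINT a:{0..}|lborel. F a)"
      using n_bdry[OF eps, of 0 x] by (simp add: F_def)
    have Fa: "F a = indicator {..<1} a * (beta mu a * g a)" if "a > 0" for a
    proof -
      have "F a = (LINT z|lborel. (beta mu a * indicator {..<1} a) * f a z)"
        unfolding F_def f_def using n_init[OF eps that] by (simp add: mult_ac)
      then show ?thesis by (simp add: g_def mult_ac)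
    qed
    have eqf: "(\<lambda>a. indicator {0..} a *\<^sub>R F a) =
        (\<lambda>a. if a = 0 then F 0 else indicator {0..<1} a *\<^sub>R (beta mu a * g a))"
    proof
      fix a :: real
      show "indicator {0..} a *\<^sub>R F a =
        (if a = 0 then F 0 else indicator {0..<1} a *\<^sub>R (beta mu a * g a))"
        using Fa[of a] by (cases "a < 0"; cases "a = 0"; cases "a < 1") (auto simp: indicator_def)
    qed
    have "(LINT a:{0..}|lborel. F a) = (LINT a:{0..<1}|lborel. beta mu a * g a)"
      unfolding set_lebesgue_integral_def eqf
    proof (rule integral_cong_AE)
      show "(\<lambda>a. if a = 0 then F 0 else indicator {0..<1} a *\<^sub>R (beta mu a * g a)) \<in> borel_measurable lborel"
        by measurable
      show "(\<lambda>a. indicator {0..<1} a *\<^sub>R (beta mu a * g a)) \<in> borel_measurable lborel"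
        by measurable
      show "AE a in lborel. (if a = 0 then F 0 else indicator {0..<1} a *\<^sub>R (beta mu a * g a)) =
          indicator {0..<1} a *\<^sub>R (beta mu a * g a)"
        using AE_lborel_singleton[of 0] by eventually_elim auto
    qed
    then show ?thesis using bd by simp
  qed
  have lo: "exp (- C / eps) < (LINT a:{0..<1}|lborel. beta mu a * k a)"
  proof -
    have "(LINT a:{0..<1}|lborel. LINT z|lborel.
           Phi mu a * omega sig z * expintbeta mu a * exp (- eta (x - eps * z) a))
        = (LINT a:{0..<1}|lborel. beta mu a * k a)"
    proof (rule set_lebesgue_integral_cong)
      show "{0::real..<1} \<in> sets lborel" by simp
      show "\<forall>a. a \<in> {0..<1} \<longrightarrow> (LINT z|lborel.
           Phi mu a * omega sig z * expintbeta mu a * exp (- eta (x - eps * z) a)) = beta mu a * k a"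
      proof (intro allI impI)
        fix a :: real assume a: "a \<in> {0..<1}"
        have "(LINT z|lborel. Phi mu a * omega sig z * expintbeta mu a * exp (- eta (x - eps * z) a))
            = (LINT z|lborel. (Phi mu a * expintbeta mu a) * h a z)"
          by (simp add: h_def mult_ac)
        also have "\<dots> = beta mu a * k a" using a by (simp add: k_def PhiE)
        finally show "(LINT z|lborel. Phi mu a * omega sig z * expintbeta mu a * exp (- eta (x - eps * z) a))
            = beta mu a * k a" .
      qed
    qed
    then show ?thesis using lower[OF eps, of x] by simp
  qed
  have lo_int: "set_integrable lborel {0..<1} (\<lambda>a. beta mu a * k a)"
  proof (rule ccontr)
    assume "\<not> set_integrable lborel {0..<1} (\<lambda>a. beta mu a * k a)"
    then have "(LINT a:{0..<1}|lborel. beta mu a * k a) = 0"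
      unfolding set_integrable_def set_lebesgue_integral_def by (simp add: not_integrable_integral_eq)
    with lo show False by (metis exp_gt_zero order.asym)
  qed
  have bg_int: "set_integrable lborel {0..<1} (\<lambda>a. beta mu a * g a)"
    unfolding set_integrable_def
  proof (rule Bochner_Integration.integrable_bound[where f="\<lambda>a. indicator {0..<1} a *\<^sub>R (exp (M / eps) * (beta mu a * k a))"])
    show "integrable lborel (\<lambda>a. indicator {0..<1} a *\<^sub>R (exp (M / eps) * (beta mu a * k a)))"
      using set_integrable_mult_right[OF lo_int, of "exp (M / eps)"] unfolding set_integrable_def by simp
    show "(\<lambda>a. indicator {0..<1} a *\<^sub>R (beta mu a * g a)) \<in> borel_measurable lborel"
      by measurable
    have "norm (indicator {0..<1} a *\<^sub>R (beta mu a * g a))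
        \<le> norm (indicator {0..<1} a *\<^sub>R (exp (M / eps) * (beta mu a * k a)))" for a
    proof (cases "a \<in> {0..<1}")
      case True
      have b: "beta mu a \<ge> 0" using True bnn by auto
      have "beta mu a * g a \<le> beta mu a * (exp (M / eps) * k a)"
        using gk[OF True] b by (intro mult_left_mono) auto
      then show ?thesis using True b gnn[of a] knn[of a] by (simp add: mult_ac)
    qed simp
    then show "AE a in lborel. norm (indicator {0..<1} a *\<^sub>R (beta mu a * g a))
        \<le> norm (indicator {0..<1} a *\<^sub>R (exp (M / eps) * (beta mu a * k a)))"
      by (intro AE_I2)
  qed
  have N0pos: "n eps 0 x 0 > 0"
  proof -
    have "exp (- M / eps) * (LINT a:{0..<1}|lborel. beta mu a * k a)
        = (LINT a:{0..<1}|lborel. exp (- M / eps) * (beta mu a * k a))" by simp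
    also have "\<dots> \<le> (LINT a:{0..<1}|lborel. beta mu a * g a)"
    proof (rule set_integral_mono)
      show "set_integrable lborel {0..<1} (\<lambda>a. exp (- M / eps) * (beta mu a * k a))"
        using lo_int by simp
      show "set_integrable lborel {0..<1} (\<lambda>a. beta mu a * g a)" by (rule bg_int)
      fix a :: real assume a: "a \<in> {0..<1}"
      have b: "beta mu a \<ge> 0" using a bnn by auto
      show "exp (- M / eps) * (beta mu a * k a) \<le> beta mu a * g a"
        using mult_left_mono[OF conjunct1[OF gk[OF a]] b] by (simp add: mult_ac)
    qed
    finally have "exp (- M / eps) * (LINT a:{0..<1}|lborel. beta mu a * k a) \<le> n eps 0 x 0"
      using N0 by simp
    moreover have "exp (- M / eps) * (LINT a:{0..<1}|lborel. beta mu a * k a) > 0"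
      using lo by (metis exp_gt_zero mult_pos_pos order.strict_trans)
    ultimately show ?thesis by simp
  qed
  have ts: "t / eps = s" by (simp add: s_def)
  define P where "P = exp (psi eps t x / eps)"
  have Ppos: "P > 0" by (simp add: P_def)
  have B: "Bop mu sig (phi0 eps) (psi eps) eps t x
      = P * (LINT a:{0..<1}|lborel. Phi mu (a + s) * expintbeta mu a * g a)"
  proof -
    have inner: "(LINT z|lborel. omega sig z * Phi mu (a + s)
        * exp ((psi eps t x - phi0 eps (x - eps * z) a) / eps) * expintbeta mu a)
        = P * (Phi mu (a + s) * expintbeta mu a * g a)" for a
    proof -
      have "(\<lambda>z. omega sig z * Phi mu (a + s)
        * exp ((psi eps t x - phi0 eps (x - eps * z) a) / eps) * expintbeta mu a)
        = (\<lambda>z. (P * (Phi mu (a + s) * expintbeta mu a)) * f a z)"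
      proof
        fix z
        have "exp ((psi eps t x - phi0 eps (x - eps * z) a) / eps)
            = P * exp (- phi0 eps (x - eps * z) a / eps)"
          by (simp add: P_def diff_divide_distrib exp_diff exp_minus field_simps)
        then show "omega sig z * Phi mu (a + s)
          * exp ((psi eps t x - phi0 eps (x - eps * z) a) / eps) * expintbeta mu a
          = (P * (Phi mu (a + s) * expintbeta mu a)) * f a z"
          by (simp add: f_def mult_ac)
      qed
      then show ?thesis by (simp add: g_def mult_ac)
    qed
    show ?thesis unfolding Bop_def ts inner by simp
  qed
  have R0nn: "Phi mu s / Phi mu 0 \<ge> 0"
    using s_pos mu by (simp add: Phi_cf)
  have PEg_int: "set_integrable lborel {0..<1} (\<lambda>a. Phi mu (a + s) * expintbeta mu a * g a)"
    unfolding set_integrable_def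
  proof (rule Bochner_Integration.integrable_bound[where f="\<lambda>a. indicator {0..<1} a *\<^sub>R (Phi mu (1 + s) / Phi mu 1 * (beta mu a * g a))"])
    show "integrable lborel (\<lambda>a. indicator {0..<1} a *\<^sub>R (Phi mu (1 + s) / Phi mu 1 * (beta mu a * g a)))"
      using set_integrable_mult_right[OF bg_int, of "Phi mu (1 + s) / Phi mu 1"] unfolding set_integrable_def by simp
    have Pm: "(\<lambda>a. Phi mu (a + s)) \<in> borel_measurable lborel" by simp
    have Em: "(\<lambda>a. expintbeta mu a) \<in> borel_measurable lborel" by simp
    show "(\<lambda>a. indicator {0..<1} a *\<^sub>R (Phi mu (a + s) * expintbeta mu a * g a)) \<in> borel_measurable lborel"
      using Pm Em by measurable
    have "norm (indicator {0..<1} a *\<^sub>R (Phi mu (a + s) * expintbeta mu a * g a))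
        \<le> norm (indicator {0..<1} a *\<^sub>R (Phi mu (1 + s) / Phi mu 1 * (beta mu a * g a)))" for a
    proof (cases "a \<in> {0..<1}")
      case True
      note rb = ratio_bounds[of a s mu]
      have lo0: "0 \<le> Phi mu (a + s) * expintbeta mu a"
        using rb(1) True s_pos mu R0nn bnn[of a] by (meson atLeastLessThan_iff less_imp_le mult_nonneg_nonneg order.trans)
      have "Phi mu (a + s) * expintbeta mu a * g a \<le> Phi mu (1 + s) / Phi mu 1 * beta mu a * g a"
        using rb(2) True s_pos mu gnn[of a] by (intro mult_right_mono) auto
      then show ?thesis using True lo0 gnn[of a] by (simp add: mult_ac) (metis abs_divide abs_ge_self order.trans)
    qed simp
    then show "AE a in lborel. norm (indicator {0..<1} a *\<^sub>R (Phi mu (a + s) * expintbeta mu a * g a))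
        \<le> norm (indicator {0..<1} a *\<^sub>R (Phi mu (1 + s) / Phi mu 1 * (beta mu a * g a)))"
      by (intro AE_I2)
  qed
  define J where "J = (LINT a:{0..<1}|lborel. Phi mu (a + s) * expintbeta mu a * g a)"
  define N where "N = n eps 0 x 0"
  have J1: "Phi mu s / Phi mu 0 * N \<le> J"
  proof -
    have "Phi mu s / Phi mu 0 * N = (LINT a:{0..<1}|lborel. Phi mu s / Phi mu 0 * (beta mu a * g a))"
      by (simp add: N_def N0)
    also have "\<dots> \<le> J" unfolding J_def
    proof (rule set_integral_mono)
      show "set_integrable lborel {0..<1} (\<lambda>a. Phi mu s / Phi mu 0 * (beta mu a * g a))"
        using bg_int by simp
      show "set_integrable lborel {0..<1} (\<lambda>a. Phi mu (a + s) * expintbeta mu a * g a)" by (rule PEg_int)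
      fix a :: real assume a: "a \<in> {0..<1}"
      show "Phi mu s / Phi mu 0 * (beta mu a * g a) \<le> Phi mu (a + s) * expintbeta mu a * g a"
      proof -
        have r: "Phi mu s / Phi mu 0 * beta mu a \<le> Phi mu (a + s) * expintbeta mu a"
          using ratio_bounds(1)[of a s mu] a s_pos mu by auto
        have "(Phi mu s / Phi mu 0 * beta mu a) * g a \<le> (Phi mu (a + s) * expintbeta mu a) * g a"
          by (rule mult_right_mono[OF r gnn])
        then show ?thesis by (simp only: mult.assoc)
      qed
    qed
    finally show ?thesis .
  qed
  have J2: "J \<le> Phi mu (1 + s) / Phi mu 1 * N"
  proof -
    have "J \<le> (LINT a:{0..<1}|lborel. Phi mu (1 + s) / Phi mu 1 * (beta mu a * g a))" unfolding J_def
    proof (rule set_integral_mono)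
      show "set_integrable lborel {0..<1} (\<lambda>a. Phi mu (1 + s) / Phi mu 1 * (beta mu a * g a))"
        using bg_int by simp
      show "set_integrable lborel {0..<1} (\<lambda>a. Phi mu (a + s) * expintbeta mu a * g a)" by (rule PEg_int)
      fix a :: real assume a: "a \<in> {0..<1}"
      show "Phi mu (a + s) * expintbeta mu a * g a \<le> Phi mu (1 + s) / Phi mu 1 * (beta mu a * g a)"
      proof -
        have r: "Phi mu (a + s) * expintbeta mu a \<le> Phi mu (1 + s) / Phi mu 1 * beta mu a"
          using ratio_bounds(2)[of a s mu] a s_pos mu by auto
        have "(Phi mu (a + s) * expintbeta mu a) * g a \<le> (Phi mu (1 + s) / Phi mu 1 * beta mu a) * g a"
          by (rule mult_right_mono[OF r gnn])
        then show ?thesis by (simp only: mult.assoc)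
      qed
    qed
    also have "\<dots> = Phi mu (1 + s) / Phi mu 1 * N" by (simp add: N_def N0)
    finally show ?thesis .
  qed
  have Npos: "N > 0" using N0pos by (simp add: N_def)
  have ex: "exp ((psi eps t x - psi eps 0 x) / eps) = P * N"
  proof -
    have "(psi eps t x - psi eps 0 x) / eps = psi eps t x / eps + ln N"
      using eps by (simp add: psi_def[of eps 0 x] N_def field_simps)
    then show ?thesis using Npos by (simp add: P_def exp_add)
  qed
  show ?thesis unfolding ts B ex J_def[symmetric]
    using mult_left_mono[OF J1 less_imp_le[OF Ppos]] mult_left_mono[OF J2 less_imp_le[OF Ppos]]
    by (simp add: mult_ac)
qed

end
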